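(* Let $k\ge1$, let $(x_{i+1/2})_{i\in\mathbb{Z}}$ be an arbitrary mesh and $(\bar v_i)_{i\in\mathbb{Z}}$ an arbitrary real sequence, and let $s_i$ and $v^\pm_{i+1/2}$ be the ENO stencil indices and cell interface values of the $k$th order ENO reconstruction. Then $s_i\le s_{i+1}$ for all $i$, and $$v^+_{i+1/2}-v^-_{i+1/2}=\sum_{s=s_i}^{s_{i+1}-1}[\bar v_s,\dots,\bar v_{s+k}]\,X_{i,s},\qquad X_{i,s}=(x_{s+k+1/2}-x_{s-1/2})\prod_{\substack{m=0\\ m\neq i-s}}^{k-1}(x_{i+1/2}-x_{s+m+1/2}),$$ where the sum is empty (equal to $0$) when $s_i=s_{i+1}$.
   Context: Mesh: a strictly increasing sequence $(x_{i+1/2})_{i\in\mathbb{Z}}$ of reals with $x_{i+1/2}\to\pm\infty$ as $i\to\pm\infty$; cells $I_i=[x_{i-1/2},x_{i+1/2})$ with lengths $\Delta x_i=x_{i+1/2}-x_{i-1/2}$. Given a real sequence $(\bar v_i)_{i\in\mathbb{Z}}$, the divided differences are defined by $[\bar v_i]=\bar v_i$ and, for $i<j$, $[\bar v_i,\dots,\bar v_j]=\frac{[\bar v_{i+1},\dots,\bar v_j]-[\bar v_i,\dots,\bar v_{j-1}]}{x_{j+1/2}-x_{i-1/2}}$. The $k$th order ENO reconstruction: for each $i$, set $s_i^1=i$, and for $\ell=1,\dots,k-1$ set $s_i^{\ell+1}=s_i^\ell-1$ if $\bigl|[\bar v_{s_i^\ell-1},\dots,\bar v_{s_i^\ell+\ell-1}]\bigr|<\bigl|[\bar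 v_{s_i^\ell},\dots,\bar v_{s_i^\ell+\ell}]\bigr|$, and $s_i^{\ell+1}=s_i^\ell$ otherwise; put $s_i=s_i^k\in\{i-k+1,\dots,i\}$. Then $p_i$ is the unique polynomial of degree at most $k-1$ with $\frac{1}{\Delta x_j}\int_{I_j}p_i(x)\,dx=\bar v_j$ for $j=s_i,\dots,s_i+k-1$. The cell interface values are $v^-_{i+1/2}=p_i(x_{i+1/2})$ and $v^+_{i+1/2}=p_{i+1}(x_{i+1/2})$. *)

theory Defs
  imports "HOL-Analysis.Analysis" "HOL-Computational_Algebra.Polynomial"
begin

text \<open>Convention: the mesh is a function xm :: int => real with xm i = x_{i+1/2}.
  Hence x_{i-1/2} = xm (i - 1) and cell I_i = [xm (i-1), xm i).\<close>

text \<open>Divided difference [v_i, ..., v_{i+n}] (n+1 entries).\<close>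
fun divdiff :: "(int \<Rightarrow> real) \<Rightarrow> (int \<Rightarrow> real) \<Rightarrow> int \<Rightarrow> nat \<Rightarrow> real" where
  "divdiff xm v i 0 = v i"
| "divdiff xm v i (Suc n) =
     (divdiff xm v (i + 1) n - divdiff xm v i n) / (xm (i + int (Suc n)) - xm (i - 1))"

text \<open>eno_aux xm v i l = s_i^{l+1}.\<close>
fun eno_aux :: "(int \<Rightarrow> real) \<Rightarrow> (int \<Rightarrow> real) \<Rightarrow> int \<Rightarrow> nat \<Rightarrow> int" where
  "eno_aux xm v i 0 = i"
| "eno_aux xm v i (Suc l) =
     (let s = eno_aux xm v i l in
      if \<bar>divdiff xm v (s - 1) (Suc l)\<bar> < \<bar>divdiff xm v s (Suc l)\<bar> then s - 1 else s)"

definition eno_stencil :: "nat \<Rightarrow> (int \<Rightarrow> real) \<Rightarrow> (int \<Rightarrow> real) \<Rightarrow> int \<Rightarrow> int" where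
  "eno_stencil k xm v i = eno_aux xm v i (k - 1)"

definition cell_avg :: "(int \<Rightarrow> real) \<Rightarrow> real poly \<Rightarrow> int \<Rightarrow> real" where
  "cell_avg xm p j = integral {xm (j - 1)..xm j} (poly p) / (xm j - xm (j - 1))"

definition eno_poly :: "nat \<Rightarrow> (int \<Rightarrow> real) \<Rightarrow> (int \<Rightarrow> real) \<Rightarrow> int \<Rightarrow> real poly" where
  "eno_poly k xm v i =
     (THE p. degree p \<le> k - 1 \<and>
        (\<forall>j. eno_stencil k xm v i \<le> j \<and> j \<le> eno_stencil k xm v i + int k - 1
              \<longrightarrow> cell_avg xm p j = v j))"

definition eno_minus :: "nat \<Rightarrow> (int \<Rightarrow> real) \<Rightarrow> (int \<Rightarrow> real) \<Rightarrow> int \<Rightarrow> real" where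
  "eno_minus k xm v i = poly (eno_poly k xm v i) (xm i)"

definition eno_plus :: "nat \<Rightarrow> (int \<Rightarrow> real) \<Rightarrow> (int \<Rightarrow> real) \<Rightarrow> int \<Rightarrow> real" where
  "eno_plus k xm v i = poly (eno_poly k xm v (i + 1)) (xm i)"

definition eno_X :: "nat \<Rightarrow> (int \<Rightarrow> real) \<Rightarrow> int \<Rightarrow> int \<Rightarrow> real" where
  "eno_X k xm i s = (xm (s + int k) - xm (s - 1)) *
     (\<Prod>m\<in>{m. m < k \<and> int m \<noteq> i - s}. (xm i - xm (s + int m)))"

end

theory Submission imports Defs begin

definition Dv :: "(int \<Rightarrow> real) \<Rightarrow> (int \<Rightarrow> real) \<Rightarrow> int \<Rightarrow> real" where
  "Dv xm v j = (xm j - xm (j - 1)) * v j"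

definition Vp :: "(int \<Rightarrow> real) \<Rightarrow> (int \<Rightarrow> real) \<Rightarrow> int \<Rightarrow> real" where
  "Vp xm v j = (if 0 \<le> j then (\<Sum>t\<in>{1..j}. Dv xm v t) else - (\<Sum>t\<in>{j+1..0}. Dv xm v t))"

lemma Vp_diff: "Vp xm v j - Vp xm v (j - 1) = Dv xm v j"
proof (cases "j \<ge> 1")
  case True
  have "{1..j} = insert j {1..j-1}" using True by auto
  then show ?thesis using True by (simp add: Vp_def)
next
  case False
  show ?thesis
  proof (cases "j = 0")
    case True then show ?thesis by (simp add: Vp_def)
  next
    case F2: False
    have "{j..0} = insert j {j+1..0}" using False F2 by auto
    then show ?thesis using False F2 by (simp add: Vp_def)
  qed
qed

fun NQ :: "(int \<Rightarrow> real) \<Rightarrow> (int \<Rightarrow> real) \<Rightarrow> int \<Rightarrow> nat \<Rightarrow> real poly" where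
  "NQ xm V a 0 = [:V (a - 1):]"
| "NQ xm V a (Suc n) = smult (1 / (xm (a + int n) - xm (a - 1)))
     ([:- xm (a - 1), 1:] * NQ xm V (a + 1) n - [:- xm (a + int n), 1:] * NQ xm V a n)"

lemma NQ_deg: "degree (NQ xm V a n) \<le> n"
proof (induction n arbitrary: a)
  case 0 then show ?case by simp
next
  case (Suc n)
  have d1: "degree ([:- xm (a - 1), 1:] * NQ xm V (a + 1) n) \<le> Suc n"
    using degree_mult_le[of "[:- xm (a - 1), 1:]" "NQ xm V (a + 1) n"] Suc[of "a+1"] by simp
  have d2: "degree ([:- xm (a + int n), 1:] * NQ xm V a n) \<le> Suc n"
    using degree_mult_le[of "[:- xm (a + int n), 1:]" "NQ xm V a n"] Suc[of "a"] by simp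
  show ?case using degree_diff_le[OF d1 d2] by (simp del: mult_pCons_left)
qed

lemma NQ_interp:
  assumes "strict_mono xm" "t \<le> n"
  shows "poly (NQ xm V a n) (xm (a - 1 + int t)) = V (a - 1 + int t)"
  using assms(2)
proof (induction n arbitrary: a t)
  case 0 then show ?case by simp
next
  case (Suc n)
  have ne: "xm (a + int n) - xm (a - 1) \<noteq> 0"
    using strict_monoD[OF assms(1), of "a-1" "a + int n"] by simp
  show ?case
  proof (cases "t = 0")
    case True
    then show ?thesis using Suc.IH[of 0 a] ne by (simp add: field_simps)
  next
    case False
    then obtain t' where t': "t = Suc t'" by (cases t) auto
    show ?thesis
    proof (cases "t = Suc n")
      case True
      have "poly (NQ xm V (a + 1) n) (xm (a + 1 - 1 + int n)) = V (a + 1 - 1 + int n)"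
        using Suc.IH[of n "a+1"] by simp
      then show ?thesis using True ne by (simp add: field_simps)
    next
      case False
      have h1: "poly (NQ xm V (a + 1) n) (xm (a + 1 - 1 + int t')) = V (a + 1 - 1 + int t')"
        using Suc.IH[of t' "a+1"] Suc.prems t' False by simp
      have h2: "poly (NQ xm V a n) (xm (a - 1 + int t)) = V (a - 1 + int t)"
        using Suc.IH[of t a] Suc.prems False by simp
      have e: "a + 1 - 1 + int t' = a - 1 + int t" using t' by simp
      show ?thesis using h1 h2 ne unfolding e by (simp add: field_simps)
    qed
  qed
qed

lemma coeff_lin_mult: "degree (q::real poly) \<le> n \<Longrightarrow> coeff ([:c, 1:] * q) (Suc n) = coeff q n"
  by (auto simp: coeff_eq_0)

lemma NQ_lead:
  "coeff (NQ xm V a (Suc n)) (Suc n) =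
     (coeff (NQ xm V (a + 1) n) n - coeff (NQ xm V a n) n) / (xm (a + int n) - xm (a - 1))"
  using coeff_lin_mult[OF NQ_deg, of "- xm (a - 1)" xm V "a+1" n]
        coeff_lin_mult[OF NQ_deg, of "- xm (a + int n)" xm V a n]
  by (simp del: mult_pCons_left add: divide_simps)

lemma NQ_dd:
  assumes "strict_mono xm"
  shows "coeff (NQ xm (Vp xm v) a (Suc n)) (Suc n) = divdiff xm v a n"
proof (induction n arbitrary: a)
  case 0
  have ne: "xm a - xm (a - 1) \<noteq> 0"
    using strict_monoD[OF assms(1), of "a-1" "a"] by simp
  have "Vp xm v a - Vp xm v (a - 1) = (xm a - xm (a - 1)) * v a"
    using Vp_diff[of xm v a] by (simp add: Dv_def)
  then show ?case using ne by (simp add: NQ_lead field_simps)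
next
  case (Suc n)
  show ?case unfolding NQ_lead[of xm _ a "Suc n"] Suc[of "a+1"] Suc[of a] by simp
qed

lemma pderiv_sum_poly: "pderiv (sum f A) = (\<Sum>a\<in>A. pderiv (f a))"
  by (induction A rule: infinite_finite_induct) (auto simp: pderiv_add)

lemma ex_antideriv: "\<exists>P. pderiv P = (p :: real poly)"
proof -
  define P where "P = (\<Sum>i\<le>degree p. monom (coeff p i / real (Suc i)) (Suc i))"
  have "pderiv P = (\<Sum>i\<le>degree p. monom (coeff p i) i)"
    unfolding P_def pderiv_sum_poly pderiv_monom by (intro sum.cong) auto
  then show ?thesis using poly_as_sum_of_monoms[of p] by auto
qed

lemma integral_poly:
  fixes a b :: real
  assumes "a \<le> b" "pderiv P = p"
  shows "integral {a..b} (poly p) = poly P b - poly P a"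
proof -
  have "(poly p has_integral (poly P b - poly P a)) {a..b}"
  proof (rule fundamental_theorem_of_calculus[OF assms(1)])
    fix x
    have "(poly P has_real_derivative poly p x) (at x within {a..b})"
      using poly_DERIV[of P x] assms(2) by (auto intro: DERIV_subset)
    then show "(poly P has_vector_derivative poly p x) (at x within {a..b})"
      using has_real_derivative_iff_has_vector_derivative by blast
  qed
  then show ?thesis by blast
qed

lemma cell_avg_pderiv:
  assumes "strict_mono xm"
  shows "cell_avg xm (pderiv P) j = (poly P (xm j) - poly P (xm (j - 1))) / (xm j - xm (j - 1))"
proof -
  have "xm (j - 1) \<le> xm j" using strict_monoD[OF assms, of "j-1" j] by simp
  then show ?thesis unfolding cell_avg_def by (simp add: integral_poly)
qed

lemma const_on_points:
  fixes xm :: "int \<Rightarrow> real"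
  assumes "strict_mono xm" "degree R \<le> k" "\<And>t. t \<le> k \<Longrightarrow> poly R (xm (a + int t)) = c"
  shows "R = [:c:]"
proof (rule poly_eqI_degree[of "(\<lambda>t. xm (a + int t)) ` {0..k}"])
  have "inj_on (\<lambda>t. xm (a + int t)) {0..k}"
    using strict_mono_on_imp_inj_on[of "{0..k}"] assms(1) unfolding inj_on_def
    by (metis add_left_cancel of_nat_eq_iff strict_mono_eq)
  then have "card ((\<lambda>t. xm (a + int t)) ` {0..k}) = Suc k" by (simp add: card_image)
  then show "degree R < card ((\<lambda>t. xm (a + int t)) ` {0..k})"
    "degree [:c:] < card ((\<lambda>t. xm (a + int t)) ` {0..k})" using assms(2) by auto
qed (use assms(3) in auto)

lemma eno_poly_eq:
  assumes "strict_mono xm" "k \<ge> 1"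
  shows "eno_poly k xm v i = pderiv (NQ xm (Vp xm v) (eno_stencil k xm v i) k)"
  unfolding eno_poly_def
proof (rule the_equality)
  define s where "s = eno_stencil k xm v i"
  define Q where "Q = NQ xm (Vp xm v) s k"
  have ne: "\<And>j. xm j - xm (j - 1) \<noteq> 0"
  proof -
    fix j :: int have "xm (j - 1) < xm j" using strict_monoD[OF assms(1), of "j-1" j] by simp
    then show "xm j - xm (j - 1) \<noteq> 0" by simp
  qed
  have Qj: "poly Q (xm j) - poly Q (xm (j - 1)) = Dv xm v j" if "s \<le> j" "j \<le> s + int k - 1" for j
  proof -
    have a: "poly Q (xm (s - 1 + int (nat (j - s + 1)))) = Vp xm v (s - 1 + int (nat (j - s + 1)))"
      unfolding Q_def by (rule NQ_interp[OF assms(1)]) (use that in auto)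
    have b: "poly Q (xm (s - 1 + int (nat (j - s)))) = Vp xm v (s - 1 + int (nat (j - s)))"
      unfolding Q_def by (rule NQ_interp[OF assms(1)]) (use that in auto)
    have e1: "s - 1 + int (nat (j - s + 1)) = j" and e2: "s - 1 + int (nat (j - s)) = j - 1" using that by auto
    show ?thesis using a b Vp_diff[of xm v j] unfolding e1 e2 by simp
  qed
  show "degree (pderiv Q) \<le> k - 1 \<and> (\<forall>j. s \<le> j \<and> j \<le> s + int k - 1 \<longrightarrow> cell_avg xm (pderiv Q) j = v j)"
  proof
    show "degree (pderiv Q) \<le> k - 1" unfolding degree_pderiv Q_def using NQ_deg[of xm "Vp xm v" s k] by simp
    show "\<forall>j. s \<le> j \<and> j \<le> s + int k - 1 \<longrightarrow> cell_avg xm (pderiv Q) j = v j"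
      using Qj ne by (auto simp: cell_avg_pderiv[OF assms(1)] Dv_def)
  qed
  fix p
  assume p: "degree p \<le> k - 1 \<and> (\<forall>j. s \<le> j \<and> j \<le> s + int k - 1 \<longrightarrow> cell_avg xm p j = v j)"
  obtain P where P: "pderiv P = p" using ex_antideriv by blast
  define R where "R = P - Q"
  have "degree P - 1 \<le> k - 1" using p P degree_pderiv[of P] by auto
  then have degP: "degree P \<le> k" using assms(2) by arith
  have degR: "degree R \<le> k" unfolding R_def
    using degree_diff_le[OF degP NQ_deg[of xm _ s k]] Q_def by simp
  have Rj: "poly R (xm j) = poly R (xm (j - 1))" if "s \<le> j" "j \<le> s + int k - 1" for j
  proof -
    have "cell_avg xm (pderiv P) j = v j" using p P that by auto
    then have "poly P (xm j) - poly P (xm (j - 1)) = Dv xm v j"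
      using ne[of j] by (simp add: cell_avg_pderiv[OF assms(1)] Dv_def field_simps)
    then show ?thesis using Qj[OF that] unfolding R_def by simp
  qed
  have Rt: "t \<le> k \<Longrightarrow> poly R (xm (s - 1 + int t)) = poly R (xm (s - 1))" for t
  proof (induction t)
    case 0 then show ?case by simp
  next
    case (Suc t)
    have e: "s - 1 + int (Suc t) - 1 = s - 1 + int t" by simp
    have "poly R (xm (s - 1 + int (Suc t))) = poly R (xm (s - 1 + int (Suc t) - 1))"
      by (rule Rj) (use Suc.prems in auto)
    then have "poly R (xm (s - 1 + int (Suc t))) = poly R (xm (s - 1 + int t))" unfolding e .
    moreover have "poly R (xm (s - 1 + int t)) = poly R (xm (s - 1))" using Suc.IH Suc_leD[OF Suc.prems] by blast
    ultimately show ?case by (rule trans)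
  qed
  have "R = [:poly R (xm (s - 1)):]" by (rule const_on_points[OF assms(1) degR Rt])
  then have "pderiv R = pderiv [:poly R (xm (s - 1)):]" by (rule arg_cong)
  then have "pderiv R = 0" by (simp add: pderiv_pCons)
  then show "p = pderiv Q" using P unfolding R_def by (simp add: pderiv_diff)
qed


lemma eno_aux_range: "i - int l \<le> eno_aux xm v i l \<and> eno_aux xm v i l \<le> i"
  by (induction l) (auto simp: Let_def)

lemma eno_aux_mono: "eno_aux xm v i l \<le> eno_aux xm v (i + 1) l"
proof (induction l)
  case 0 then show ?case by simp
next
  case (Suc l)
  show ?case
  proof (cases "eno_aux xm v i l = eno_aux xm v (i + 1) l")
    case True then show ?thesis by (simp add: Let_def)
  next
    case False
    then have "eno_aux xm v i l < eno_aux xm v (i + 1) l" using Suc by simp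
    then show ?thesis by (auto simp: Let_def)
  qed
qed

definition Wp :: "(int \<Rightarrow> real) \<Rightarrow> nat \<Rightarrow> int \<Rightarrow> real poly" where
  "Wp xm k s = (\<Prod>m<k. [:- xm (s + int m), 1:])"

lemma Wp_degree: "degree (Wp xm k s) = k"
  unfolding Wp_def by (subst degree_prod_sum_eq) auto

lemma Wp_lead: "coeff (Wp xm k s) k = 1"
  using lead_coeff_prod[of "\<lambda>m. [:- xm (s + int m), 1:]" "{..<k}"] Wp_degree[of xm k s]
  unfolding Wp_def by simp

lemma Wp_root: "m < k \<Longrightarrow> poly (Wp xm k s) (xm (s + int m)) = 0"
  unfolding Wp_def poly_prod by (rule prod_zero) auto

lemma NQ_shift:
  assumes "strict_mono xm" "k \<ge> 1"
  shows "NQ xm (Vp xm v) (s + 1) k - NQ xm (Vp xm v) s k =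
           smult (divdiff xm v s k * (xm (s + int k) - xm (s - 1))) (Wp xm k s)"
proof (rule poly_eqI_degree_lead_coeff[where n=k and A="(\<lambda>m. xm (s + int m)) ` {..<k}"])
  obtain k' where k': "k = Suc k'" using assms(2) by (cases k) auto
  have ne: "xm (s + int (Suc k')) - xm (s - 1) \<noteq> 0"
    using strict_monoD[OF assms(1), of "s-1" "s + int (Suc k')"] by simp
  show "coeff (NQ xm (Vp xm v) (s + 1) k - NQ xm (Vp xm v) s k) k =
    coeff (smult (divdiff xm v s k * (xm (s + int k) - xm (s - 1))) (Wp xm k s)) k"
  proof -
    have c1: "coeff (NQ xm (Vp xm v) (s + 1) (Suc k')) (Suc k') = divdiff xm v (s + 1) k'"
      by (rule NQ_dd[OF assms(1)])
    have c2: "coeff (NQ xm (Vp xm v) s (Suc k')) (Suc k') = divdiff xm v s k'"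
      by (rule NQ_dd[OF assms(1)])
    have d: "divdiff xm v s (Suc k') = (divdiff xm v (s + 1) k' - divdiff xm v s k') / (xm (s + int (Suc k')) - xm (s - 1))"
      by simp
    show ?thesis unfolding k' coeff_diff coeff_smult c1 c2 Wp_lead d using ne by simp
  qed
  have "inj_on (\<lambda>m. xm (s + int m)) {..<k}"
    using assms(1) unfolding inj_on_def
    by (metis add_left_cancel of_nat_eq_iff strict_mono_eq)
  then show "k \<le> card ((\<lambda>m. xm (s + int m)) ` {..<k})" by (simp add: card_image)
  show "degree (NQ xm (Vp xm v) (s + 1) k - NQ xm (Vp xm v) s k) \<le> k"
    using degree_diff_le[OF NQ_deg NQ_deg] .
  show "degree (smult (divdiff xm v s k * (xm (s + int k) - xm (s - 1))) (Wp xm k s)) \<le> k"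
    using Wp_degree[of xm k s] degree_smult_le order.trans by metis
  fix z assume "z \<in> (\<lambda>m. xm (s + int m)) ` {..<k}"
  then obtain m where m: "m < k" "z = xm (s + int m)" by auto
  have a: "poly (NQ xm (Vp xm v) (s + 1) k) (xm (s + 1 - 1 + int m)) = Vp xm v (s + 1 - 1 + int m)"
    by (rule NQ_interp[OF assms(1)]) (use m in auto)
  have b: "poly (NQ xm (Vp xm v) s k) (xm (s - 1 + int (Suc m))) = Vp xm v (s - 1 + int (Suc m))"
    by (rule NQ_interp[OF assms(1)]) (use m in auto)
  have e1: "s + 1 - 1 + int m = s + int m" and e2: "s - 1 + int (Suc m) = s + int m" by auto
  show "poly (NQ xm (Vp xm v) (s + 1) k - NQ xm (Vp xm v) s k) z =
    poly (smult (divdiff xm v s k * (xm (s + int k) - xm (s - 1))) (Wp xm k s)) z"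
    using a b unfolding e1 e2 m(2) by (simp add: Wp_root[OF m(1)])
qed

lemma telescope_int: "f (a + int n) - f a = (\<Sum>s\<in>{a..a + int n - 1}. f (s + 1) - (f s :: real))"
proof (induction n)
  case 0 then show ?case by simp
next
  case (Suc n)
  have "{a..a + int (Suc n) - 1} = insert (a + int n) {a..a + int n - 1}" by auto
  then show ?case using Suc by (simp add: algebra_simps)
qed

lemma deriv_Wp_root:
  assumes "m0 < k"
  shows "poly (pderiv (Wp xm k s)) (xm (s + int m0)) = (\<Prod>m\<in>{..<k} - {m0}. xm (s + int m0) - xm (s + int m))"
proof -
  let ?f = "\<lambda>m. [:- xm (s + int m), 1:]"
  let ?x = "xm (s + int m0)"
  have "poly (pderiv (Wp xm k s)) ?x = (\<Sum>a\<in>{..<k}. \<Prod>m\<in>{..<k} - {a}. ?x - xm (s + int m))"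
    unfolding Wp_def pderiv_prod poly_sum by (simp add: poly_prod pderiv_pCons)
  also have "\<dots> = (\<Prod>m\<in>{..<k} - {m0}. ?x - xm (s + int m))"
  proof (subst sum.remove[of _ m0])
    have z0: "(\<Prod>m\<in>{..<k} - {a}. ?x - xm (s + int m)) = 0" if "a \<in> {..<k} - {m0}" for a
      by (rule prod_zero) (use that assms in auto)
    have "(\<Sum>a\<in>{..<k} - {m0}. \<Prod>m\<in>{..<k} - {a}. ?x - xm (s + int m)) = 0"
      by (rule sum.neutral) (use z0 in blast)
    then show "(\<Prod>m\<in>{..<k} - {m0}. ?x - xm (s + int m)) +
      (\<Sum>a\<in>{..<k} - {m0}. \<Prod>m\<in>{..<k} - {a}. ?x - xm (s + int m)) = (\<Prod>m\<in>{..<k} - {m0}. ?x - xm (s + int m))"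
      by simp
  qed (use assms in auto)
  finally show ?thesis .
qed


theorem mainTheorem2:
  fixes k :: nat and xm :: "int \<Rightarrow> real" and v :: "int \<Rightarrow> real"
  assumes "k \<ge> 1"
    and "strict_mono xm"
    and "filterlim xm at_top at_top"
    and "filterlim xm at_bot at_bot"
  shows "\<forall>i. eno_stencil k xm v i \<le> eno_stencil k xm v (i + 1) \<and>
           eno_plus k xm v i - eno_minus k xm v i =
             (\<Sum>s\<in>{eno_stencil k xm v i..eno_stencil k xm v (i + 1) - 1}.
                divdiff xm v s k * eno_X k xm i s)"
proof
  fix i
  define s0 where "s0 = eno_stencil k xm v i"
  define s1 where "s1 = eno_stencil k xm v (i + 1)"
  have mono: "s0 \<le> s1" unfolding s0_def s1_def eno_stencil_def by (rule eno_aux_mono)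
  have r0: "i - int (k - 1) \<le> s0" unfolding s0_def eno_stencil_def using eno_aux_range by blast
  have r1: "s1 \<le> i + 1" unfolding s1_def eno_stencil_def using eno_aux_range by blast
  define f where "f s = poly (pderiv (NQ xm (Vp xm v) s k)) (xm i)" for s
  have pm: "eno_plus k xm v i - eno_minus k xm v i = f s1 - f s0"
    unfolding eno_plus_def eno_minus_def f_def s0_def s1_def
    using eno_poly_eq[OF assms(2) assms(1)] by simp
  have s1e: "s1 = s0 + int (nat (s1 - s0))" using mono by simp
  have "f s1 - f s0 = (\<Sum>s\<in>{s0..s1 - 1}. f (s + 1) - f s)"
    using telescope_int[of f s0 "nat (s1 - s0)"] s1e by simp
  also have "\<dots> = (\<Sum>s\<in>{s0..s1 - 1}. divdiff xm v s k * eno_X k xm i s)"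
  proof (rule sum.cong[OF refl])
    fix s assume s: "s \<in> {s0..s1 - 1}"
    define m0 where "m0 = nat (i - s)"
    have m0k: "m0 < k" and xi: "xm i = xm (s + int m0)"
      using s r0 r1 assms(1) unfolding m0_def by auto
    define c where "c = divdiff xm v s k * (xm (s + int k) - xm (s - 1))"
    have "f (s + 1) - f s = poly (pderiv (NQ xm (Vp xm v) (s + 1) k - NQ xm (Vp xm v) s k)) (xm i)"
      unfolding f_def pderiv_diff by simp
    also have "\<dots> = c * poly (pderiv (Wp xm k s)) (xm i)"
      unfolding NQ_shift[OF assms(2) assms(1)] c_def pderiv_smult by simp
    also have "\<dots> = c * (\<Prod>m\<in>{..<k} - {m0}. xm i - xm (s + int m))"
      unfolding xi deriv_Wp_root[OF m0k] ..
    also have "{..<k} - {m0} = {m. m < k \<and> int m \<noteq> i - s}"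
      using s r0 r1 unfolding m0_def by auto
    finally show "f (s + 1) - f s = divdiff xm v s k * eno_X k xm i s"
      unfolding eno_X_def c_def by simp
  qed
  finally show "eno_stencil k xm v i \<le> eno_stencil k xm v (i + 1) \<and>
           eno_plus k xm v i - eno_minus k xm v i =
             (\<Sum>s\<in>{eno_stencil k xm v i..eno_stencil k xm v (i + 1) - 1}.
                divdiff xm v s k * eno_X k xm i s)"
    using mono pm unfolding s0_def s1_def by simp
qed

end
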